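(* Let $G = K \rtimes_\varphi \langle t\rangle$ be a finitely generated group, where $K$ is abelian, $\langle t\rangle$ is infinite cyclic and $\varphi\in\mathrm{Aut}(K)$. Then the set of periodic points $P_\varphi=\{a\in K:\ \varphi^n(a)=a\text{ for some } n\ge1\}$ is a finitely generated subgroup of $K$ satisfying $\varphi(P_\varphi)=P_\varphi$.
   Context: $K$ is written additively and $tkt^{-1}=\varphi(k)$. *)

theory Defs
  imports "HOL-Algebra.Algebra"
begin

definition aut_pow :: "('a, 'b) monoid_scheme \<Rightarrow> ('a \<Rightarrow> 'a) \<Rightarrow> int \<Rightarrow> 'a \<Rightarrow> 'a" where
  "aut_pow K \<phi> m = (if 0 \<le> m then \<phi> ^^ nat m else (inv_into (carrier K) \<phi>) ^^ nat (- m))"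

text \<open>The semidirect product K by the infinite cyclic group generated by t, with t k t^-1 = phi k.
  The pair (a, m) represents a t^m, so (a t^m)(b t^n) = (a phi^m(b)) t^(m+n).\<close>
definition semidirect_Z :: "('a, 'b) monoid_scheme \<Rightarrow> ('a \<Rightarrow> 'a) \<Rightarrow> ('a \<times> int) monoid" where
  "semidirect_Z K \<phi> =
     \<lparr> carrier = carrier K \<times> (UNIV :: int set),
       monoid.mult = (\<lambda>(a, m) (b, n). (a \<otimes>\<^bsub>K\<^esub> aut_pow K \<phi> m b, m + n)),
       monoid.one = (\<one>\<^bsub>K\<^esub>, 0) \<rparr>"

definition finitely_generated_group :: "('a, 'b) monoid_scheme \<Rightarrow> bool" where
  "finitely_generated_group G \<longleftrightarrow>
     (\<exists>S. finite S \<and> S \<subseteq> carrier G \<and> generate G S = carrier G)"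

definition periodic_points :: "('a, 'b) monoid_scheme \<Rightarrow> ('a \<Rightarrow> 'a) \<Rightarrow> 'a set" where
  "periodic_points K \<phi> = {a \<in> carrier K. \<exists>n::nat. n \<ge> 1 \<and> (\<phi> ^^ n) a = a}"

end

theory Submission
  imports Defs
begin


locale PS = comm_group K for K (structure) +
  fixes \<phi> :: "'a \<Rightarrow> 'a"
  assumes aut: "\<phi> \<in> auto K"
begin

definition psi where "psi = inv_into (carrier K) \<phi>"

lemma phi_hom: "\<phi> \<in> hom K K" using aut by (simp add: auto_def)
lemma phi_bij: "bij_betw \<phi> (carrier K) (carrier K)" using aut by (simp add: auto_def Bij_def)
lemma psi_hom: "psi \<in> hom K K"
  using iso_set_sym[of \<phi> K] phi_hom phi_bij unfolding psi_def by (simp add: iso_def)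
lemma phi_closed[simp]: "x \<in> carrier K \<Longrightarrow> \<phi> x \<in> carrier K" using phi_hom by (simp add: hom_in_carrier)
lemma psi_closed[simp]: "x \<in> carrier K \<Longrightarrow> psi x \<in> carrier K" using psi_hom by (simp add: hom_in_carrier)
lemma phi_psi[simp]: "x \<in> carrier K \<Longrightarrow> \<phi> (psi x) = x"
  using phi_bij unfolding psi_def by (simp add: bij_betw_inv_into_right)
lemma psi_phi[simp]: "x \<in> carrier K \<Longrightarrow> psi (\<phi> x) = x"
  using phi_bij unfolding psi_def by (simp add: bij_betw_inv_into_left)

lemma fpow_hom: "f \<in> hom K K \<Longrightarrow> f ^^ n \<in> hom K K"
  by (induction n) (auto simp: hom_def Pi_def)

lemma ghom: "f \<in> hom K K \<Longrightarrow> group_hom K K f"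
  by (simp add: group_hom_def group_hom_axioms_def is_group)

lemma fpow_closed[simp]:
  "x \<in> carrier K \<Longrightarrow> (\<phi>^^n) x \<in> carrier K" "x \<in> carrier K \<Longrightarrow> (psi^^n) x \<in> carrier K"
  by (simp_all add: hom_in_carrier[OF fpow_hom[OF phi_hom]] hom_in_carrier[OF fpow_hom[OF psi_hom]])

lemma fpow_mult[simp]:
  "x \<in> carrier K \<Longrightarrow> y \<in> carrier K \<Longrightarrow> (\<phi>^^n) (x \<otimes> y) = (\<phi>^^n) x \<otimes> (\<phi>^^n) y"
  "x \<in> carrier K \<Longrightarrow> y \<in> carrier K \<Longrightarrow> (psi^^n) (x \<otimes> y) = (psi^^n) x \<otimes> (psi^^n) y"
  using fpow_hom[OF phi_hom] fpow_hom[OF psi_hom] by (auto simp: hom_mult)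

lemma fpow_inv[simp]:
  "x \<in> carrier K \<Longrightarrow> (\<phi>^^n) (inv x) = inv ((\<phi>^^n) x)"
  "x \<in> carrier K \<Longrightarrow> (psi^^n) (inv x) = inv ((psi^^n) x)"
  using ghom[OF fpow_hom[OF phi_hom]] ghom[OF fpow_hom[OF psi_hom]]
  by (auto simp: group_hom.hom_inv)

lemma fpow_one[simp]: "(\<phi>^^n) \<one> = \<one>" "(psi^^n) \<one> = \<one>"
  using ghom[OF fpow_hom[OF phi_hom]] ghom[OF fpow_hom[OF psi_hom]]
  by (auto simp: group_hom.hom_one)

lemma fpow_pow[simp]:
  "x \<in> carrier K \<Longrightarrow> (\<phi>^^n) (x [^] (i::int)) = ((\<phi>^^n) x) [^] i"
  "x \<in> carrier K \<Longrightarrow> (psi^^n) (x [^] (i::int)) = ((psi^^n) x) [^] i"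
  using ghom[OF fpow_hom[OF phi_hom]] ghom[OF fpow_hom[OF psi_hom]]
  by (auto simp: group_hom.hom_int_pow)

lemma phi_mult[simp]: "x \<in> carrier K \<Longrightarrow> y \<in> carrier K \<Longrightarrow> \<phi> (x \<otimes> y) = \<phi> x \<otimes> \<phi> y"
  using fpow_mult(1)[of x y 1] by simp
lemma psi_mult[simp]: "x \<in> carrier K \<Longrightarrow> y \<in> carrier K \<Longrightarrow> psi (x \<otimes> y) = psi x \<otimes> psi y"
  using fpow_mult(2)[of x y 1] by simp
lemma phi_inv[simp]: "x \<in> carrier K \<Longrightarrow> \<phi> (inv x) = inv (\<phi> x)"
  using fpow_inv(1)[of x 1] by simp
lemma psi_inv[simp]: "x \<in> carrier K \<Longrightarrow> psi (inv x) = inv (psi x)"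
  using fpow_inv(2)[of x 1] by simp
lemma phi_one[simp]: "\<phi> \<one> = \<one>" using fpow_one(1)[of 1] by simp
lemma psi_one[simp]: "psi \<one> = \<one>" using fpow_one(2)[of 1] by simp
lemma phi_pow[simp]: "x \<in> carrier K \<Longrightarrow> \<phi> (x [^] (i::int)) = (\<phi> x) [^] i"
  using fpow_pow(1)[of x 1] by simp

lemma psi_phi_n[simp]: "x \<in> carrier K \<Longrightarrow> (psi^^n) ((\<phi>^^n) x) = x"
proof (induction n arbitrary: x)
  case (Suc n)
  have "(psi^^Suc n) ((\<phi>^^Suc n) x) = (psi^^n) (psi (\<phi> ((\<phi>^^n) x)))"
    by (metis comp_apply funpow.simps(2) funpow_Suc_right)
  then show ?case using Suc by simp
qed simp
lemma phi_psi_n[simp]: "x \<in> carrier K \<Longrightarrow> (\<phi>^^n) ((psi^^n) x) = x"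
proof (induction n arbitrary: x)
  case (Suc n)
  have "(\<phi>^^Suc n) ((psi^^Suc n) x) = (\<phi>^^n) (\<phi> (psi ((psi^^n) x)))"
    by (metis comp_apply funpow.simps(2) funpow_Suc_right)
  then show ?case using Suc by simp
qed simp

definition inv_sub where
  "inv_sub H \<longleftrightarrow> subgroup H K \<and> (\<forall>x\<in>H. \<phi> x \<in> H) \<and> (\<forall>x\<in>H. psi x \<in> H)"

lemma inv_sub_fpow:
  assumes "inv_sub H" "x \<in> H" shows "(\<phi>^^n) x \<in> H" "(psi^^n) x \<in> H"
  using assms by (induction n) (auto simp: inv_sub_def)

definition gens where
  "gens Xs = {y. \<exists>x\<in>Xs. \<exists>n. y = (\<phi>^^n) x \<or> y = (psi^^n) x}"

definition kspan where "kspan Xs = generate K (gens Xs)"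

lemma gens_carrier: "Xs \<subseteq> carrier K \<Longrightarrow> gens Xs \<subseteq> carrier K"
  by (auto simp: gens_def)

lemma gens_phi: "y \<in> gens Xs \<Longrightarrow> Xs \<subseteq> carrier K \<Longrightarrow> \<phi> y \<in> gens Xs"
proof -
  assume "y \<in> gens Xs" "Xs \<subseteq> carrier K"
  then obtain x n where x: "x \<in> Xs" "y = (\<phi>^^n) x \<or> y = (psi^^n) x" by (auto simp: gens_def)
  have xc: "x \<in> carrier K" using x \<open>Xs \<subseteq> carrier K\<close> by auto
  show ?thesis
  proof (cases "y = (\<phi>^^n) x")
    case True
    then have "\<phi> y = (\<phi>^^Suc n) x" by simp
    then show ?thesis using x unfolding gens_def by blast
  next
    case False
    then have y: "y = (psi^^n) x" using x by auto
    show ?thesis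
    proof (cases n)
      case 0 then have "\<phi> y = (\<phi>^^1) x" using y by simp
      then show ?thesis using x unfolding gens_def by blast
    next
      case (Suc m) then have "\<phi> y = (psi^^m) x" using y xc by (simp add: funpow_swap1[symmetric])
      then show ?thesis using x unfolding gens_def by blast
    qed
  qed
qed

lemma gens_psi: "y \<in> gens Xs \<Longrightarrow> Xs \<subseteq> carrier K \<Longrightarrow> psi y \<in> gens Xs"
proof -
  assume "y \<in> gens Xs" "Xs \<subseteq> carrier K"
  then obtain x n where x: "x \<in> Xs" "y = (\<phi>^^n) x \<or> y = (psi^^n) x" by (auto simp: gens_def)
  have xc: "x \<in> carrier K" using x \<open>Xs \<subseteq> carrier K\<close> by auto
  show ?thesis
  proof (cases "y = (psi^^n) x")
    case True
    then have "psi y = (psi^^Suc n) x" by simp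
    then show ?thesis using x unfolding gens_def by blast
  next
    case False
    then have y: "y = (\<phi>^^n) x" using x by auto
    show ?thesis
    proof (cases n)
      case 0 then have "psi y = (psi^^1) x" using y by simp
      then show ?thesis using x unfolding gens_def by blast
    next
      case (Suc m) then have "psi y = (\<phi>^^m) x" using y xc by (simp add: funpow_swap1[symmetric])
      then show ?thesis using x unfolding gens_def by blast
    qed
  qed
qed

lemma generate_hom_closed:
  assumes "f \<in> hom K K" "Gs \<subseteq> carrier K" "\<And>y. y \<in> Gs \<Longrightarrow> f y \<in> Gs"
    and "x \<in> generate K Gs"
  shows "f x \<in> generate K Gs"
  using assms(4)
proof (induction rule: generate.induct)
  case one then show ?case using ghom[OF assms(1)] by (simp add: group_hom.hom_one generate.one)
next
  case (incl h) then show ?case using assms by (simp add: generate.incl)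
next
  case (inv h) then show ?case using assms ghom[OF assms(1)]
    by (metis generate.inv group_hom.hom_inv subsetD)
next
  case (eng h1 h2)
  have "h1 \<in> carrier K" "h2 \<in> carrier K" using eng.hyps generate_in_carrier assms(2) by auto
  then show ?case using eng.IH assms(1) by (simp add: hom_mult generate.eng)
qed

lemma kspan_inv_sub: "Xs \<subseteq> carrier K \<Longrightarrow> inv_sub (kspan Xs)"
  unfolding inv_sub_def kspan_def
  using generate_is_subgroup[OF gens_carrier] generate_hom_closed[OF phi_hom gens_carrier gens_phi]
    generate_hom_closed[OF psi_hom gens_carrier gens_psi] by blast

lemma kspan_incl: "Xs \<subseteq> kspan Xs"
proof
  fix x assume "x \<in> Xs"
  then have "x \<in> gens Xs" unfolding gens_def by (metis (mono_tags, lifting) funpow_0 mem_Collect_eq)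
  then show "x \<in> kspan Xs" unfolding kspan_def by (rule generate.incl)
qed

lemma kspan_min: assumes "Xs \<subseteq> H" "inv_sub H" shows "kspan Xs \<subseteq> H"
proof -
  have "gens Xs \<subseteq> H" using assms inv_sub_fpow unfolding gens_def by blast
  then show ?thesis unfolding kspan_def using generate_subgroup_incl assms(2) inv_sub_def by blast
qed

lemma kspan_mono: "Xs \<subseteq> Ys \<Longrightarrow> gens Xs \<subseteq> gens Ys" unfolding gens_def by blast

lemma kspan_mono': "Xs \<subseteq> Ys \<Longrightarrow> kspan Xs \<subseteq> kspan Ys"
  unfolding kspan_def by (simp add: kspan_mono mono_generate)

lemma inv_sub_carrier: "inv_sub H \<Longrightarrow> H \<subseteq> carrier K"
  by (simp add: inv_sub_def subgroup.subset)

end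


lemma int_sub_gen:
  fixes S :: "int set"
  assumes "0 \<in> S" "\<And>c d z. c \<in> S \<Longrightarrow> d \<in> S \<Longrightarrow> c - z * d \<in> S"
  shows "\<exists>g\<in>S. \<forall>c\<in>S. g dvd c"
proof (cases "\<forall>c\<in>S. c = 0")
  case True then show ?thesis using assms(1) by auto
next
  case False
  then obtain c where c: "c \<in> S" "c \<noteq> 0" by auto
  have "\<bar>c\<bar> \<in> S" using assms(2)[OF assms(1) c(1), of "- sgn c"] by (simp add: abs_sgn mult.commute)
  define P where "P m \<longleftrightarrow> m > 0 \<and> int m \<in> S" for m :: nat
  have Pc: "P (nat \<bar>c\<bar>)" using \<open>\<bar>c\<bar> \<in> S\<close> c(2) by (simp add: P_def)
  define m where "m = (LEAST m. P m)"
  have Pm: "P m" unfolding m_def by (rule LeastI[of P, OF Pc])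
  show ?thesis
  proof (intro bexI ballI)
    show "int m \<in> S" using Pm by (simp add: P_def)
    fix d assume d: "d \<in> S"
    have "d - (d div int m) * int m \<in> S" using assms(2)[OF d \<open>int m \<in> S\<close>] by simp
    then have r: "d mod int m \<in> S" by (simp add: minus_div_mult_eq_mod)
    have "d mod int m = 0"
    proof (rule ccontr)
      assume "d mod int m \<noteq> 0"
      moreover have "d mod int m \<ge> 0" "d mod int m < int m" using Pm by (auto simp: P_def)
      ultimately have "P (nat (d mod int m))" using r by (simp add: P_def)
      then have "m \<le> nat (d mod int m)" unfolding m_def by (rule Least_le)
      moreover have "0 \<le> d mod int m" using Pm by (simp add: P_def)
      ultimately show False using \<open>d mod int m < int m\<close> le_nat_iff[of "d mod int m" m] by linarith
    qed
    then show "int m dvd d" by auto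
  qed
qed

context PS begin

fun actN :: "'a \<Rightarrow> nat \<Rightarrow> (nat \<Rightarrow> int) \<Rightarrow> 'a" where
  "actN a 0 f = \<one>"
| "actN a (Suc n) f = actN a n f \<otimes> ((\<phi>^^n) a) [^] f n"

lemma actN_closed[simp]: "a \<in> carrier K \<Longrightarrow> actN a n f \<in> carrier K"
  by (induction n) auto

lemma actN_add: "a \<in> carrier K \<Longrightarrow> actN a n (\<lambda>i. f i + g i) = actN a n f \<otimes> actN a n g"
  by (induction n) (auto simp: int_pow_mult m_ac)

lemma actN_neg: "a \<in> carrier K \<Longrightarrow> actN a n (\<lambda>i. - f i) = inv (actN a n f)"
  by (induction n) (auto simp: int_pow_neg inv_mult)

lemma actN_smult: "a \<in> carrier K \<Longrightarrow> actN a n (\<lambda>i. z * f i) = (actN a n f) [^] z"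
  by (induction n) (auto simp: int_pow_distrib int_pow_pow mult.commute)

lemma actN_cong: "(\<And>i. i < n \<Longrightarrow> f i = g i) \<Longrightarrow> actN a n f = actN a n g"
  by (induction n) auto

lemma actN_zero: "a \<in> carrier K \<Longrightarrow> (\<And>i. i < n \<Longrightarrow> f i = 0) \<Longrightarrow> actN a n f = \<one>"
  by (induction n) auto

lemma actN_pad: "a \<in> carrier K \<Longrightarrow> (\<And>i. i \<ge> n \<Longrightarrow> f i = 0) \<Longrightarrow> n \<le> m \<Longrightarrow> actN a m f = actN a n f"
proof (induction m)
  case 0 then show ?case by simp
next
  case (Suc m)
  show ?case
  proof (cases "n \<le> m")
    case True then show ?thesis using Suc by simp
  next
    case False then have "n = Suc m" using Suc by simp
    then show ?thesis by simp
  qed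
qed

definition sh :: "nat \<Rightarrow> (nat \<Rightarrow> int) \<Rightarrow> nat \<Rightarrow> int" where
  "sh j f i = (if i < j then 0 else f (i - j))"

lemma actN_shift1: "a \<in> carrier K \<Longrightarrow> \<phi> (actN a n f) = actN a (Suc n) (sh 1 f)"
proof (induction n)
  case 0 then show ?case by (simp add: sh_def)
next
  case (Suc n)
  have c: "actN a n f \<in> carrier K" "(\<phi>^^n) a \<in> carrier K" using Suc.prems by auto
  have "\<phi> (actN a (Suc n) f) = \<phi> (actN a n f) \<otimes> \<phi> (((\<phi>^^n) a) [^] f n)"
    using c by (simp only: actN.simps phi_mult int_pow_closed)
  also have "\<dots> = actN a (Suc n) (sh 1 f) \<otimes> ((\<phi>^^(Suc n)) a) [^] f n"
    using c Suc.IH[OF Suc.prems] by (simp only: phi_pow funpow.simps comp_apply)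
  also have "\<dots> = actN a (Suc (Suc n)) (sh 1 f)" by (simp add: sh_def)
  finally show ?case .
qed

lemma sh_Suc: "sh 1 (sh j f) = sh (Suc j) f"
  by (auto simp: sh_def fun_eq_iff)

lemma actN_shift: "a \<in> carrier K \<Longrightarrow> (\<phi>^^j) (actN a n f) = actN a (n + j) (sh j f)"
proof (induction j)
  case 0 then show ?case by (simp add: sh_def)
next
  case (Suc j)
  have "(\<phi>^^Suc j) (actN a n f) = \<phi> (actN a (n + j) (sh j f))" using Suc by simp
  also have "\<dots> = actN a (Suc (n + j)) (sh 1 (sh j f))" by (rule actN_shift1[OF Suc.prems])
  also have "\<dots> = actN a (n + Suc j) (sh (Suc j) f)" by (simp only: sh_Suc add_Suc_right)
  finally show ?case .
qed

lemma actN_unit: "a \<in> carrier K \<Longrightarrow> actN a 1 (\<lambda>i. if i = 0 then 1 else 0) = a"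
  by simp

lemma actN_comb:
  assumes a: "a \<in> carrier K" and f: "\<And>i. i \<ge> n \<Longrightarrow> f i = 0" and g: "\<And>i. i \<ge> m \<Longrightarrow> g i = 0"
    and k: "k \<in> carrier K" and k': "k' \<in> carrier K"
  shows "(actN a n f \<otimes> k) \<otimes> inv ((actN a m g \<otimes> k') [^] z)
       = actN a (max n m) (\<lambda>i. f i - z * g i) \<otimes> (k \<otimes> inv (k' [^] z))"
proof -
  have 1: "actN a (max n m) f = actN a n f" using actN_pad[of a n f "max n m"] a f by (meson max.cobounded1)
  have 2: "actN a (max n m) g = actN a m g" using actN_pad[of a m g "max n m"] a g by (meson max.cobounded2)
  have "actN a (max n m) (\<lambda>i. f i - z * g i) = actN a (max n m) (\<lambda>i. f i + - (z * g i))"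
    by (simp only: diff_conv_add_uminus)
  also have "\<dots> = actN a (max n m) f \<otimes> inv ((actN a (max n m) g) [^] z)"
    using a by (simp only: actN_add actN_neg actN_smult)
  also have "\<dots> = actN a n f \<otimes> inv ((actN a m g) [^] z)" by (simp only: 1 2)
  finally have e: "actN a (max n m) (\<lambda>i. f i - z * g i) = actN a n f \<otimes> inv ((actN a m g) [^] z)" .
  define A where "A = actN a n f"
  define b where "b = (actN a m g) [^] z"
  define c where "c = k' [^] z"
  have A: "A \<in> carrier K" and b: "b \<in> carrier K" and c: "c \<in> carrier K"
    using a k' unfolding A_def b_def c_def by (simp_all only: actN_closed int_pow_closed)
  have "(actN a m g \<otimes> k') [^] z = b \<otimes> c" unfolding b_def c_def by (rule int_pow_distrib[OF actN_closed[OF a] k'])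
  then have "(actN a n f \<otimes> k) \<otimes> inv ((actN a m g \<otimes> k') [^] z) = (A \<otimes> k) \<otimes> (inv b \<otimes> inv c)"
    using b c by (simp only: A_def inv_mult)
  also have "\<dots> = A \<otimes> (k \<otimes> (inv b \<otimes> inv c))" using A b c k by (simp only: m_assoc inv_closed m_closed)
  also have "\<dots> = A \<otimes> (inv b \<otimes> (k \<otimes> inv c))" using A b c k by (simp only: m_lcomm inv_closed)
  also have "\<dots> = (A \<otimes> inv b) \<otimes> (k \<otimes> inv c)" using A b c k by (simp only: m_assoc inv_closed m_closed)
  finally show ?thesis unfolding e A_def b_def c_def .
qed

end

context PS begin

lemma step:
  assumes a: "a \<in> carrier K" and M0: "inv_sub M0" and H: "inv_sub H"
  shows "\<exists>B. finite B \<and> B \<subseteq> H \<and> (\<forall>x f n k. x \<in> H \<longrightarrow> k \<in> M0 \<longrightarrow> (\<forall>i\<ge>n. f i = 0)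
           \<longrightarrow> x = actN a n f \<otimes> k \<longrightarrow> x \<in> kspan (B \<union> (H \<inter> M0)))"
proof -
  have Hs: "subgroup H K" and M0s: "subgroup M0 K" using H M0 by (auto simp: inv_sub_def)
  have Hc: "H \<subseteq> carrier K" and M0c: "M0 \<subseteq> carrier K" using Hs M0s subgroup.subset by auto
  define J where "J = {f. \<exists>n k. (\<forall>i\<ge>n. f i = 0) \<and> k \<in> M0 \<and> actN a n f \<otimes> k \<in> H}"
  define L where "L e = {f e | f. f \<in> J \<and> (\<forall>i>e. f i = 0)}" for e
  have J0: "(\<lambda>i. 0) \<in> J"
  proof -
    have "actN a 0 (\<lambda>i. 0) \<otimes> \<one> \<in> H" using Hs by (simp add: subgroup.one_closed)
    then show ?thesis unfolding J_def using M0s subgroup.one_closed by blast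
  qed
  have Jsub: "(\<lambda>i. f i - z * g i) \<in> J" if f: "f \<in> J" and g: "g \<in> J" for f g z
  proof -
    obtain n k where n: "\<forall>i\<ge>n. f i = 0" and k: "k \<in> M0" and fh: "actN a n f \<otimes> k \<in> H"
      using f unfolding J_def by blast
    obtain m k' where m: "\<forall>i\<ge>m. g i = 0" and k': "k' \<in> M0" and gh: "actN a m g \<otimes> k' \<in> H"
      using g unfolding J_def by blast
    have kc: "k \<in> carrier K" "k' \<in> carrier K" using k k' M0c by auto
    have eq: "(actN a n f \<otimes> k) \<otimes> inv ((actN a m g \<otimes> k') [^] z)
       = actN a (max n m) (\<lambda>i. f i - z * g i) \<otimes> (k \<otimes> inv (k' [^] z))"
      by (rule actN_comb[OF a _ _ kc]) (use n m in auto)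
    have "(actN a n f \<otimes> k) \<otimes> inv ((actN a m g \<otimes> k') [^] z) \<in> H"
      by (rule subgroup.m_closed[OF Hs fh subgroup.m_inv_closed[OF Hs subgroup_int_pow_closed[OF Hs gh]]])
    then have 1: "actN a (max n m) (\<lambda>i. f i - z * g i) \<otimes> (k \<otimes> inv (k' [^] z)) \<in> H"
      unfolding eq .
    have 2: "k \<otimes> inv (k' [^] z) \<in> M0"
      using k k' M0s by (intro subgroup.m_closed[OF M0s] subgroup.m_inv_closed[OF M0s] subgroup_int_pow_closed) auto
    have 3: "\<forall>i\<ge>max n m. f i - z * g i = 0" using n m by auto
    show ?thesis unfolding J_def using 1 2 3 by blast
  qed
  have Jsh: "sh j f \<in> J" if f: "f \<in> J" for f j
  proof -
    obtain n k where n: "\<forall>i\<ge>n. f i = 0" and k: "k \<in> M0" and fh: "actN a n f \<otimes> k \<in> H"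
      using f unfolding J_def by blast
    have kc: "k \<in> carrier K" using k M0c by auto
    have "(\<phi>^^j) (actN a n f \<otimes> k) \<in> H" using inv_sub_fpow(1)[OF H fh] .
    then have 1: "actN a (n + j) (sh j f) \<otimes> (\<phi>^^j) k \<in> H"
      using kc a by (simp add: actN_shift)
    have 2: "(\<phi>^^j) k \<in> M0" using inv_sub_fpow(1)[OF M0 k] .
    have 3: "\<forall>i\<ge>n+j. sh j f i = 0" using n by (auto simp: sh_def)
    show ?thesis unfolding J_def using 1 2 3 by blast
  qed
  have L0: "0 \<in> L e" for e unfolding L_def using J0 by force
  have Lsub: "c - z * d \<in> L e" if cL: "c \<in> L e" and dL: "d \<in> L e" for c d z e
  proof -
    obtain f where f: "f \<in> J" "\<forall>i>e. f i = 0" "c = f e" using cL unfolding L_def by blast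
    obtain g where g: "g \<in> J" "\<forall>i>e. g i = 0" "d = g e" using dL unfolding L_def by blast
    have "(\<lambda>i. f i - z * g i) \<in> J" using Jsub f g by blast
    moreover have "\<forall>i>e. f i - z * g i = 0" using f g by auto
    ultimately show ?thesis unfolding L_def using f g by force
  qed
  have Lmono: "L e \<subseteq> L e'" if ee: "e \<le> e'" for e e'
  proof
    fix c assume "c \<in> L e"
    then obtain f where f: "f \<in> J" "\<forall>i>e. f i = 0" "c = f e" unfolding L_def by blast
    have "sh (e' - e) f \<in> J" using Jsh f by blast
    moreover have "\<forall>i>e'. sh (e' - e) f i = 0" using f ee by (auto simp: sh_def)
    moreover have "sh (e' - e) f e' = c" using f ee by (auto simp: sh_def)
    ultimately show "c \<in> L e'" unfolding L_def by force
  qed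
  define U where "U = (\<Union>e. L e)"
  have "\<exists>g\<in>U. \<forall>c\<in>U. g dvd c"
  proof (rule int_sub_gen)
    show "0 \<in> U" unfolding U_def using L0 by blast
    fix c d z assume "c \<in> U" "d \<in> U"
    then obtain e1 e2 where "c \<in> L e1" "d \<in> L e2" unfolding U_def by blast
    then have "c \<in> L (max e1 e2)" "d \<in> L (max e1 e2)" using Lmono[of e1 "max e1 e2"] Lmono[of e2 "max e1 e2"] by auto
    then show "c - z * d \<in> U" unfolding U_def using Lsub by blast
  qed
  then obtain gU D where gUL: "gU \<in> L D" and gUdvd: "\<forall>c\<in>U. gU dvd c" unfolding U_def by blast
  have gfex: "\<forall>e. \<exists>g. g \<in> L e \<and> (\<forall>c\<in>L e. g dvd c)"
    using int_sub_gen[OF L0 Lsub] by blast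
  obtain gf where gf0: "\<forall>e. gf e \<in> L e \<and> (\<forall>c\<in>L e. gf e dvd c)" using choice[OF gfex] by blast
  have gf: "gf e \<in> L e \<and> (\<forall>c\<in>L e. gf e dvd c)" for e using gf0 by blast
  define G where "G e = (if e = D then gU else gf e)" for e
  have GL: "G e \<in> L e" for e using gf gUL by (simp add: G_def)
  have Gdvd: "\<forall>c\<in>L e. G e dvd c" for e
    using gf gUdvd unfolding G_def U_def by auto
  have Rex: "\<forall>e. \<exists>t. (fst t) e = G e \<and> (\<forall>i>e. (fst t) i = 0) \<and> (\<forall>i\<ge>fst (snd t). (fst t) i = 0)
           \<and> snd (snd t) \<in> M0 \<and> actN a (fst (snd t)) (fst t) \<otimes> snd (snd t) \<in> H"
  proof
    fix e
    obtain f where f: "f \<in> J" "\<forall>i>e. f i = 0" "G e = f e" using GL[of e] unfolding L_def by blast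
    obtain n k where "\<forall>i\<ge>n. f i = 0" "k \<in> M0" "actN a n f \<otimes> k \<in> H" using f(1) unfolding J_def by blast
    then show "\<exists>t. (fst t) e = G e \<and> (\<forall>i>e. (fst t) i = 0) \<and> (\<forall>i\<ge>fst (snd t). (fst t) i = 0)
           \<and> snd (snd t) \<in> M0 \<and> actN a (fst (snd t)) (fst t) \<otimes> snd (snd t) \<in> H"
      using f by (intro exI[of _ "(f, n, k)"]) auto
  qed
  obtain R where R: "\<And>e. (fst (R e)) e = G e \<and> (\<forall>i>e. (fst (R e)) i = 0) \<and> (\<forall>i\<ge>fst (snd (R e)). (fst (R e)) i = 0)
           \<and> snd (snd (R e)) \<in> M0 \<and> actN a (fst (snd (R e))) (fst (R e)) \<otimes> snd (snd (R e)) \<in> H"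
    using choice[OF Rex] by blast
  define F where "F e = fst (R e)" for e
  define NN where "NN e = fst (snd (R e))" for e
  define KK where "KK e = snd (snd (R e))" for e
  have FG: "F e e = G e" and Fz: "\<forall>i>e. F e i = 0" and FN: "\<forall>i\<ge>NN e. F e i = 0"
    and KM: "KK e \<in> M0" and hH: "actN a (NN e) (F e) \<otimes> KK e \<in> H" for e
    using R[of e] unfolding F_def NN_def KK_def by blast+
  define hB where "hB e = actN a (NN e) (F e) \<otimes> KK e" for e
  define B where "B = hB ` {..D}"
  have Bfin: "finite B" unfolding B_def by simp
  have BH: "B \<subseteq> H" unfolding B_def hB_def using hH by auto
  define Sp where "Sp = kspan (B \<union> (H \<inter> M0))"
  have BHc: "B \<union> (H \<inter> M0) \<subseteq> carrier K" using BH Hc by blast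
  have Spi: "inv_sub Sp" unfolding Sp_def by (rule kspan_inv_sub[OF BHc])
  have BSp: "B \<subseteq> Sp" and HMSp: "H \<inter> M0 \<subseteq> Sp" unfolding Sp_def using kspan_incl[of "B \<union> (H \<inter> M0)"] by blast+
  have Sps: "subgroup Sp K" using Spi by (simp add: inv_sub_def)
  have red: "\<exists>y g m k' z. y \<in> Sp \<and> y \<in> H \<and> k' \<in> M0 \<and> (\<forall>i\<ge>m. g i = 0) \<and> (\<forall>i>e. g i = 0)
              \<and> c = z * g e \<and> y = actN a m g \<otimes> k'" if c: "c \<in> L e" for c e
  proof (cases "e \<le> D")
    case True
    obtain z where z: "c = G e * z" using Gdvd c by (meson dvdE)
    have "hB e \<in> Sp" using BSp True unfolding B_def by auto
    moreover have "hB e \<in> H" using hH unfolding hB_def by auto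
    ultimately show ?thesis using KM FN Fz z FG unfolding hB_def
      by (intro exI[of _ "hB e"] exI[of _ "F e"] exI[of _ "NN e"] exI[of _ "KK e"] exI[of _ z]) (auto simp: hB_def mult.commute)
  next
    case False
    define j where "j = e - D"
    have "c \<in> U" using c unfolding U_def by blast
    then obtain z where z: "c = gU * z" using gUdvd by (meson dvdE)
    have hD: "hB D \<in> Sp" "hB D \<in> H" using BSp hH unfolding B_def hB_def by auto
    define y where "y = (\<phi>^^j) (hB D)"
    have yS: "y \<in> Sp" "y \<in> H" using hD inv_sub_fpow(1) Spi H unfolding y_def by auto
    have kDc: "KK D \<in> carrier K" using KM M0c by auto
    have ye: "y = actN a (NN D + j) (sh j (F D)) \<otimes> (\<phi>^^j) (KK D)"
      unfolding y_def hB_def using a kDc by (simp add: actN_shift)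
    have k'M: "(\<phi>^^j) (KK D) \<in> M0" using inv_sub_fpow(1)[OF M0 KM] .
    have g1: "\<forall>i\<ge>NN D + j. sh j (F D) i = 0" using FN by (auto simp: sh_def)
    have g2: "\<forall>i>e. sh j (F D) i = 0" using Fz False unfolding j_def by (auto simp: sh_def)
    have g3: "sh j (F D) e = gU" using FG False unfolding j_def sh_def G_def by auto
    show ?thesis using yS ye k'M g1 g2 g3 z
      by (intro exI[of _ y] exI[of _ "sh j (F D)"] exI[of _ "NN D + j"] exI[of _ "(\<phi>^^j) (KK D)"] exI[of _ z])
        (auto simp: mult.commute)
  qed
  have main: "\<forall>x f n k. (\<forall>i\<ge>N. f i = 0) \<longrightarrow> (\<forall>i\<ge>n. f i = 0) \<longrightarrow> k \<in> M0
        \<longrightarrow> x = actN a n f \<otimes> k \<longrightarrow> x \<in> H \<longrightarrow> x \<in> Sp" for N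
  proof (induction N)
    case 0
    show ?case
    proof (intro allI impI)
      fix x f n k
      assume f0: "\<forall>i\<ge>0. f i = (0::int)" and "\<forall>i\<ge>n. f i = 0" and k: "k \<in> M0" and x: "x = actN a n f \<otimes> k" and xH: "x \<in> H"
      have "actN a n f = \<one>" using actN_zero[OF a] f0 by blast
      moreover have "k \<in> carrier K" using k M0c by blast
      ultimately have "x = k" using x by (simp only: l_one)
      then show "x \<in> Sp" using xH k HMSp by auto
    qed
  next
    case (Suc N)
    show ?case
    proof (intro allI impI)
      fix x f n k
      assume fN: "\<forall>i\<ge>Suc N. f i = (0::int)" and fn: "\<forall>i\<ge>n. f i = 0" and k: "k \<in> M0"
        and x: "x = actN a n f \<otimes> k" and xH: "x \<in> H"
      have fJ: "f \<in> J" unfolding J_def using fn k x xH by blast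
      have "f N \<in> L N" unfolding L_def using fJ fN by force
      then obtain y g m k' z where y: "y \<in> Sp" "y \<in> H" and k': "k' \<in> M0" and gm: "\<forall>i\<ge>m. g i = 0"
        and gN: "\<forall>i>N. g i = 0" and cz: "f N = z * g N" and ye: "y = actN a m g \<otimes> k'"
        using red by blast
      have kc: "k \<in> carrier K" "k' \<in> carrier K" using k k' M0c by auto
      define x' where "x' = x \<otimes> inv (y [^] z)"
      have x'e: "x' = actN a (max n m) (\<lambda>i. f i - z * g i) \<otimes> (k \<otimes> inv (k' [^] z))"
        unfolding x'_def x ye by (rule actN_comb[OF a _ _ kc]) (use fn gm in auto)
      have x'H: "x' \<in> H" unfolding x'_def
        by (rule subgroup.m_closed[OF Hs xH subgroup.m_inv_closed[OF Hs subgroup_int_pow_closed[OF Hs y(2)]]])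
      have kM: "k \<otimes> inv (k' [^] z) \<in> M0"
        using k k' M0s by (intro subgroup.m_closed[OF M0s] subgroup.m_inv_closed[OF M0s] subgroup_int_pow_closed) auto
      have s1: "\<forall>i\<ge>N. f i - z * g i = 0"
      proof (intro allI impI)
        fix i assume "i \<ge> N"
        then consider "i = N" | "i \<ge> Suc N" by linarith
        then show "f i - z * g i = 0"
        proof cases
          case 1 then show ?thesis using cz by simp
        next
          case 2 then have "f i = 0" "g i = 0" using fN gN by auto
          then show ?thesis by simp
        qed
      qed
      have s2: "\<forall>i\<ge>max n m. f i - z * g i = 0" using fn gm by auto
      have x'S: "x' \<in> Sp" using Suc.IH[rule_format, OF s1[rule_format] s2[rule_format] kM x'e x'H] .
      have yz: "y [^] z \<in> Sp" using y Sps subgroup_int_pow_closed by blast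
      have xc: "x \<in> carrier K" and yc: "y [^] z \<in> carrier K" using xH Hc y Hc by auto
      have "x = x' \<otimes> y [^] z" unfolding x'_def using xc yc by (simp add: m_assoc)
      then show "x \<in> Sp" using subgroup.m_closed[OF Sps x'S yz] by simp
    qed
  qed
  show ?thesis
  proof (intro exI conjI allI impI)
    show "finite B" by (rule Bfin)
    show "B \<subseteq> H" by (rule BH)
    fix x f n k assume "x \<in> H" "k \<in> M0" "\<forall>i\<ge>n. f i = 0" "x = actN a n f \<otimes> k"
    then show "x \<in> kspan (B \<union> (H \<inter> M0))" using main[of n] unfolding Sp_def by blast
  qed
qed

end

context PS begin

definition Rep where
  "Rep a M0 x \<longleftrightarrow> (\<exists>m n f k. k \<in> M0 \<and> (\<forall>i\<ge>n. f i = 0) \<and> (\<phi>^^m) x = actN a n f \<otimes> k)"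

lemma Rep_inv:
  assumes a: "a \<in> carrier K" and M0: "inv_sub M0" and x: "x \<in> carrier K" and R: "Rep a M0 x"
  shows "Rep a M0 (inv x)"
proof -
  obtain m n f k where k: "k \<in> M0" and f: "\<forall>i\<ge>n. f i = 0" and e: "(\<phi>^^m) x = actN a n f \<otimes> k"
    using R unfolding Rep_def by (elim exE conjE) assumption
  have kc: "k \<in> carrier K" using k M0 inv_sub_carrier by blast
  have "(\<phi>^^m) (inv x) = inv (actN a n f \<otimes> k)" using x e by simp
  also have "\<dots> = actN a n (\<lambda>i. - f i) \<otimes> inv k" using a kc by (simp add: inv_mult actN_neg)
  finally have "(\<phi>^^m) (inv x) = actN a n (\<lambda>i. - f i) \<otimes> inv k" .
  moreover have "inv k \<in> M0" using k M0 by (simp add: inv_sub_def subgroup.m_inv_closed)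
  moreover have "\<forall>i\<ge>n. - f i = 0" using f by simp
  ultimately show ?thesis unfolding Rep_def by (intro exI conjI)
qed

lemma Rep_shift:
  assumes a: "a \<in> carrier K" and M0: "inv_sub M0" and x: "x \<in> carrier K"
    and k: "k \<in> M0" and f: "\<forall>i\<ge>n. f i = 0" and e: "(\<phi>^^m) x = actN a n f \<otimes> k"
  shows "(\<phi>^^(m + j)) x = actN a (n + j) (sh j f) \<otimes> (\<phi>^^j) k \<and> (\<phi>^^j) k \<in> M0 \<and> (\<forall>i\<ge>n+j. sh j f i = 0)"
proof -
  have kc: "k \<in> carrier K" using k M0 inv_sub_carrier by blast
  have "(\<phi>^^(m + j)) x = (\<phi>^^j) ((\<phi>^^m) x)" by (simp add: funpow_add add.commute)
  also have "\<dots> = actN a (n + j) (sh j f) \<otimes> (\<phi>^^j) k" using e a kc by (simp add: actN_shift)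
  finally show ?thesis using inv_sub_fpow(1)[OF M0 k] f by (auto simp: sh_def)
qed

lemma Rep_mult:
  assumes a: "a \<in> carrier K" and M0: "inv_sub M0" and x: "x \<in> carrier K" and y: "y \<in> carrier K"
    and Rx: "Rep a M0 x" and Ry: "Rep a M0 y"
  shows "Rep a M0 (x \<otimes> y)"
proof -
  obtain m1 n1 f1 k1 where k1: "k1 \<in> M0" and f1: "\<forall>i\<ge>n1. f1 i = 0" and e1: "(\<phi>^^m1) x = actN a n1 f1 \<otimes> k1"
    using Rx unfolding Rep_def by (elim exE conjE) assumption
  obtain m2 n2 f2 k2 where k2: "k2 \<in> M0" and f2: "\<forall>i\<ge>n2. f2 i = 0" and e2: "(\<phi>^^m2) y = actN a n2 f2 \<otimes> k2"
    using Ry unfolding Rep_def by (elim exE conjE) assumption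
  note s1 = Rep_shift[OF a M0 x k1 f1 e1, of m2]
  note s2 = Rep_shift[OF a M0 y k2 f2 e2, of m1]
  define g1 where "g1 = sh m2 f1"
  define g2 where "g2 = sh m1 f2"
  define N where "N = max (n1 + m2) (n2 + m1)"
  define l1 where "l1 = (\<phi>^^m2) k1"
  define l2 where "l2 = (\<phi>^^m1) k2"
  have l: "l1 \<in> M0" "l2 \<in> M0" using s1 s2 unfolding l1_def l2_def by auto
  have lc: "l1 \<in> carrier K" "l2 \<in> carrier K" using l M0 inv_sub_carrier by blast+
  have g1z: "\<forall>i\<ge>n1 + m2. g1 i = 0" and g2z: "\<forall>i\<ge>n2 + m1. g2 i = 0" using s1 s2 unfolding g1_def g2_def by auto
  have p1: "actN a N g1 = actN a (n1 + m2) g1"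
    using actN_pad[of a "n1 + m2" g1 N] a g1z unfolding N_def by (meson max.cobounded1)
  have p2: "actN a N g2 = actN a (n2 + m1) g2"
    using actN_pad[of a "n2 + m1" g2 N] a g2z unfolding N_def by (meson max.cobounded2)
  have ex: "(\<phi>^^(m1 + m2)) x = actN a N g1 \<otimes> l1" using s1 p1 unfolding g1_def l1_def by simp
  have ey: "(\<phi>^^(m1 + m2)) y = actN a N g2 \<otimes> l2" using s2 p2 unfolding g2_def l2_def by (simp add: add.commute)
  have "(\<phi>^^(m1 + m2)) (x \<otimes> y) = (actN a N g1 \<otimes> l1) \<otimes> (actN a N g2 \<otimes> l2)"
    using x y ex ey by simp
  also have "\<dots> = actN a N (\<lambda>i. g1 i + g2 i) \<otimes> (l1 \<otimes> l2)"
    using a lc by (simp add: actN_add m_ac)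
  finally have e: "(\<phi>^^(m1 + m2)) (x \<otimes> y) = actN a N (\<lambda>i. g1 i + g2 i) \<otimes> (l1 \<otimes> l2)" .
  have "l1 \<otimes> l2 \<in> M0" using l M0 by (simp add: inv_sub_def subgroup.m_closed)
  moreover have "\<forall>i\<ge>N. g1 i + g2 i = 0" using g1z g2z unfolding N_def by auto
  ultimately show ?thesis unfolding Rep_def using e by (intro exI conjI)
qed

lemma rep:
  assumes a: "a \<in> carrier K" and A0: "A0 \<subseteq> carrier K" and x: "x \<in> kspan (insert a A0)"
  shows "Rep a (kspan A0) x"
proof -
  define M0 where "M0 = kspan A0"
  have M0: "inv_sub M0" unfolding M0_def by (rule kspan_inv_sub[OF A0])
  have Ic: "insert a A0 \<subseteq> carrier K" using a A0 by blast
  have gc: "gens (insert a A0) \<subseteq> carrier K" by (rule gens_carrier[OF Ic])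
  have R1: "Rep a M0 \<one>"
  proof -
    have "(\<phi>^^0) \<one> = actN a 0 (\<lambda>i. 0) \<otimes> \<one>" by simp
    moreover have "\<one> \<in> M0" using M0 by (simp add: inv_sub_def subgroup.one_closed)
    moreover have "\<forall>i\<ge>0. (\<lambda>i::nat. 0::int) i = 0" by simp
    ultimately show ?thesis unfolding Rep_def by (intro exI conjI)
  qed
  define e0 where "e0 = (\<lambda>i::nat. if i = 0 then (1::int) else 0)"
  have ae: "actN a 1 e0 = a" using a unfolding e0_def by simp
  have Rg: "Rep a M0 y" if y: "y \<in> gens (insert a A0)" for y
  proof -
    obtain b j where b: "b \<in> insert a A0" and yb: "y = (\<phi>^^j) b \<or> y = (psi^^j) b"
      using y unfolding gens_def by blast
    show ?thesis
    proof (cases "b = a")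
      case False
      then have "b \<in> A0" using b by blast
      then have "y \<in> gens A0" using yb unfolding gens_def by blast
      then have yM: "y \<in> M0" unfolding M0_def kspan_def by (rule generate.incl)
      have yc: "y \<in> carrier K" using yM M0 inv_sub_carrier by blast
      have "(\<phi>^^0) y = actN a 0 (\<lambda>i. 0) \<otimes> y" using yc by simp
      moreover have "\<forall>i\<ge>0. (\<lambda>i::nat. 0::int) i = 0" by simp
      ultimately
      show ?thesis unfolding Rep_def using yM by (intro exI conjI)
    next
      case True
      show ?thesis
      proof (cases "y = (\<phi>^^j) b")
        case True
        have "(\<phi>^^0) y = actN a (1 + j) (sh j e0) \<otimes> \<one>"
        proof -
          have "actN a (1 + j) (sh j e0) = (\<phi>^^j) (actN a 1 e0)" by (rule actN_shift[OF a, symmetric])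
          then have "actN a (1 + j) (sh j e0) = y" using True \<open>b = a\<close> ae by simp
          then show ?thesis using a \<open>b = a\<close> True by simp
        qed
        moreover have "\<one> \<in> M0" using M0 by (simp add: inv_sub_def subgroup.one_closed)
        moreover have "\<forall>i\<ge>1 + j. sh j e0 i = 0" by (auto simp: sh_def e0_def)
        ultimately show ?thesis unfolding Rep_def by (intro exI conjI)
      next
        case False
        then have "y = (psi^^j) a" using yb \<open>b = a\<close> by blast
        then have "(\<phi>^^j) y = actN a 1 e0 \<otimes> \<one>" using a ae by simp
        moreover have "\<one> \<in> M0" using M0 by (simp add: inv_sub_def subgroup.one_closed)
        moreover have "\<forall>i\<ge>1. e0 i = 0" by (auto simp: e0_def)
        ultimately show ?thesis unfolding Rep_def by (intro exI conjI)
      qed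
    qed
  qed
  have "x \<in> generate K (gens (insert a A0))" using x unfolding kspan_def .
  then have "Rep a M0 x"
  proof (induction rule: generate.induct)
    case one then show ?case by (rule R1)
  next
    case (incl h) then show ?case by (rule Rg)
  next
    case (inv h) then show ?case using Rep_inv[OF a M0 _ Rg] gc by blast
  next
    case (eng h1 h2)
    have "h1 \<in> carrier K" "h2 \<in> carrier K" using eng.hyps generate_in_carrier gc by blast+
    then show ?case using Rep_mult[OF a M0 _ _ eng.IH] by blast
  qed
  then show ?thesis unfolding M0_def .
qed

lemma noeth:
  assumes "finite A" "A \<subseteq> carrier K" "inv_sub H" "H \<subseteq> kspan A"
  shows "\<exists>B. finite B \<and> B \<subseteq> H \<and> kspan B = H"
  using assms
proof (induction A arbitrary: H rule: finite_induct)
  case empty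
  have "gens {} = {}" unfolding gens_def by blast
  then have k0: "kspan {} = {\<one>}" unfolding kspan_def by (simp add: generate_empty)
  have "\<one> \<in> H" using empty.prems by (simp add: inv_sub_def subgroup.one_closed)
  then have "H = {\<one>}" using empty.prems k0 by blast
  then show ?case using k0 by (intro exI[of _ "{}"]) auto
next
  case (insert a A0)
  have a: "a \<in> carrier K" and A0: "A0 \<subseteq> carrier K" using insert.prems by auto
  define M0 where "M0 = kspan A0"
  have M0: "inv_sub M0" unfolding M0_def by (rule kspan_inv_sub[OF A0])
  have H: "inv_sub H" using insert.prems by blast
  have H0: "inv_sub (H \<inter> M0)" using H M0 unfolding inv_sub_def by (auto intro: subgroups_Inter_pair)
  obtain B0 where B0: "finite B0" "B0 \<subseteq> H \<inter> M0" "kspan B0 = H \<inter> M0"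
    using insert.IH[OF A0 H0] unfolding M0_def by blast
  obtain B1 where B1: "finite B1" "B1 \<subseteq> H"
    and B1p: "\<And>x f n k. x \<in> H \<Longrightarrow> k \<in> M0 \<Longrightarrow> (\<forall>i\<ge>n. f i = 0) \<Longrightarrow> x = actN a n f \<otimes> k
        \<Longrightarrow> x \<in> kspan (B1 \<union> (H \<inter> M0))"
    using step[OF a M0 H] by blast
  define B where "B = B1 \<union> B0"
  have Bc: "B \<subseteq> carrier K" using B1 B0 H inv_sub_carrier unfolding B_def by blast
  have SB: "inv_sub (kspan B)" by (rule kspan_inv_sub[OF Bc])
  have sub1: "kspan (B1 \<union> (H \<inter> M0)) \<subseteq> kspan B"
  proof (rule kspan_min[OF _ SB])
    have "B1 \<subseteq> kspan B" using kspan_incl[of B] unfolding B_def by blast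
    moreover have "H \<inter> M0 \<subseteq> kspan B" using B0(3) kspan_mono'[of B0 B] unfolding B_def by blast
    ultimately show "B1 \<union> (H \<inter> M0) \<subseteq> kspan B" by blast
  qed
  have "H \<subseteq> kspan B"
  proof
    fix x assume xH: "x \<in> H"
    then have "x \<in> kspan (insert a A0)" using insert.prems by blast
    then have "Rep a M0 x" unfolding M0_def by (rule rep[OF a A0])
    then obtain m n f k where k: "k \<in> M0" and f: "\<forall>i\<ge>n. f i = 0" and e: "(\<phi>^^m) x = actN a n f \<otimes> k"
      unfolding Rep_def by (elim exE conjE) assumption
    have "(\<phi>^^m) x \<in> H" using inv_sub_fpow(1)[OF H xH] .
    then have "(\<phi>^^m) x \<in> kspan B" using B1p[OF _ k f e] sub1 by blast
    then have "(psi^^m) ((\<phi>^^m) x) \<in> kspan B" using inv_sub_fpow(2)[OF SB] by blast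
    moreover have "x \<in> carrier K" using xH H inv_sub_carrier by blast
    ultimately show "x \<in> kspan B" by simp
  qed
  moreover have "kspan B \<subseteq> H" using kspan_min[OF _ H] B1 B0 unfolding B_def by blast
  ultimately show ?case using B1 B0 unfolding B_def by (intro exI[of _ "B1 \<union> B0"]) auto
qed

end

context PS begin

abbreviation P where "P \<equiv> aut_pow K \<phi>"

lemma P_def': "P m = (if 0 \<le> m then \<phi>^^nat m else psi^^nat (- m))"
  by (simp add: aut_pow_def psi_def)

lemma P_closed[simp]: "x \<in> carrier K \<Longrightarrow> P m x \<in> carrier K"
  by (simp add: P_def')

lemma P_mult[simp]: "x \<in> carrier K \<Longrightarrow> y \<in> carrier K \<Longrightarrow> P m (x \<otimes> y) = P m x \<otimes> P m y"
  by (simp add: P_def')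

lemma P_inv[simp]: "x \<in> carrier K \<Longrightarrow> P m (inv x) = inv (P m x)"
  by (simp add: P_def')

lemma P_one[simp]: "P m \<one> = \<one>"
  by (simp add: P_def')

lemma P_zero[simp]: "P 0 x = x"
  by (simp add: P_def')

lemma phipsi: "x \<in> carrier K \<Longrightarrow> (\<phi>^^a) ((psi^^b) x) = (if b \<le> a then (\<phi>^^(a-b)) x else (psi^^(b-a)) x)"
proof (cases "b \<le> a")
  case True
  assume x: "x \<in> carrier K"
  have "(\<phi>^^a) ((psi^^b) x) = (\<phi>^^(a-b)) ((\<phi>^^b) ((psi^^b) x))"
    using True by (metis funpow_add le_add_diff_inverse2 comp_apply)
  then show ?thesis using True x by simp
next
  case False
  assume x: "x \<in> carrier K"
  have "(\<phi>^^a) ((psi^^b) x) = (\<phi>^^a) ((psi^^a) ((psi^^(b-a)) x))"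
    using False by (metis funpow_add le_add_diff_inverse nat_le_linear comp_apply)
  then show ?thesis using False x by simp
qed

lemma psiphi: "x \<in> carrier K \<Longrightarrow> (psi^^a) ((\<phi>^^b) x) = (if b \<le> a then (psi^^(a-b)) x else (\<phi>^^(b-a)) x)"
proof (cases "b \<le> a")
  case True
  assume x: "x \<in> carrier K"
  have "(psi^^a) ((\<phi>^^b) x) = (psi^^(a-b)) ((psi^^b) ((\<phi>^^b) x))"
    using True by (metis funpow_add le_add_diff_inverse2 comp_apply)
  then show ?thesis using True x by simp
next
  case False
  assume x: "x \<in> carrier K"
  have "(psi^^a) ((\<phi>^^b) x) = (psi^^a) ((\<phi>^^a) ((\<phi>^^(b-a)) x))"
    using False by (metis funpow_add le_add_diff_inverse nat_le_linear comp_apply)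
  then show ?thesis using False x by simp
qed

lemma P_comp: assumes x: "x \<in> carrier K" shows "P m (P n x) = P (m + n) x"
proof -
  have ff: "(f^^a) ((f^^b) y) = (f^^(a+b)) y" for f :: "'a \<Rightarrow> 'a" and a b y by (simp add: funpow_add)
  show ?thesis
  proof (cases "0 \<le> m")
    case m: True
    show ?thesis
    proof (cases "0 \<le> n")
      case True then show ?thesis using m by (simp add: P_def' ff nat_add_distrib)
    next
      case n: False
      have q1: "nat m - nat (- n) = nat (m + n)" "nat (- n) - nat m = nat (- m - n)" using m n by arith+
      show ?thesis using m n x by (simp add: P_def' phipsi q1)
    qed
  next
    case m: False
    show ?thesis
    proof (cases "0 \<le> n")
      case n: True
      have q1: "nat n - nat (- m) = nat (m + n)" "nat (- m) - nat n = nat (- m - n)" using m n by arith+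
      show ?thesis using m n x by (simp add: P_def' psiphi q1)
    next
      case n: False
      have q: "nat (- m) + nat (- n) = nat (- m - n)" using m n by arith
      show ?thesis using m n by (simp add: P_def' ff q)
    qed
  qed
qed

lemma inv_sub_P: "inv_sub H \<Longrightarrow> x \<in> H \<Longrightarrow> P m x \<in> H"
  by (simp add: P_def' inv_sub_fpow)


abbreviation G where "G \<equiv> semidirect_Z K \<phi>"

lemma G_simps[simp]:
  "carrier G = carrier K \<times> UNIV"
  "\<one>\<^bsub>G\<^esub> = (\<one>, 0)"
  "(a, m) \<otimes>\<^bsub>G\<^esub> (b, n) = (a \<otimes> P m b, m + n)"
  by (simp_all add: semidirect_Z_def)

lemma G_group: "group G"
proof (rule groupI)
  fix x y assume "x \<in> carrier G" "y \<in> carrier G"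
  then show "x \<otimes>\<^bsub>G\<^esub> y \<in> carrier G" by (cases x, cases y) auto
next
  show "\<one>\<^bsub>G\<^esub> \<in> carrier G" by simp
next
  fix x y z assume "x \<in> carrier G" "y \<in> carrier G" "z \<in> carrier G"
  then obtain a m b n c l where xyz: "x = (a, m)" "y = (b, n)" "z = (c, l)"
    and c: "a \<in> carrier K" "b \<in> carrier K" "c \<in> carrier K" by (cases x, cases y, cases z) auto
  have "P m (b \<otimes> P n c) = P m b \<otimes> P (m + n) c" using c by (simp add: P_comp)
  then show "x \<otimes>\<^bsub>G\<^esub> y \<otimes>\<^bsub>G\<^esub> z = x \<otimes>\<^bsub>G\<^esub> (y \<otimes>\<^bsub>G\<^esub> z)"
    using c unfolding xyz by (simp add: m_assoc add.assoc)
next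
  fix x assume "x \<in> carrier G"
  then show "\<one>\<^bsub>G\<^esub> \<otimes>\<^bsub>G\<^esub> x = x" by (cases x) auto
next
  fix x assume "x \<in> carrier G"
  then obtain a m where x: "x = (a, m)" and a: "a \<in> carrier K" by (cases x) auto
  have "(P (- m) (inv a), - m) \<otimes>\<^bsub>G\<^esub> x = \<one>\<^bsub>G\<^esub>"
    using a unfolding x by (simp add: P_comp P_mult[symmetric])
  moreover have "(P (- m) (inv a), - m) \<in> carrier G" using a by simp
  ultimately show "\<exists>y\<in>carrier G. y \<otimes>\<^bsub>G\<^esub> x = \<one>\<^bsub>G\<^esub>" by blast
qed

lemma G_inv: "a \<in> carrier K \<Longrightarrow> inv\<^bsub>G\<^esub> (a, m) = (P (- m) (inv a), - m)"
proof -
  assume a: "a \<in> carrier K"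
  have "(P (- m) (inv a), - m) \<otimes>\<^bsub>G\<^esub> (a, m) = \<one>\<^bsub>G\<^esub>"
    using a by (simp add: P_comp P_mult[symmetric])
  then show ?thesis using group.inv_equality[OF G_group] a by simp
qed

lemma K_span:
  assumes fg: "finitely_generated_group G"
  shows "\<exists>A. finite A \<and> A \<subseteq> carrier K \<and> carrier K \<subseteq> kspan A"
proof -
  obtain S where S: "finite S" "S \<subseteq> carrier G" "generate G S = carrier G"
    using fg unfolding finitely_generated_group_def by blast
  define A where "A = fst ` S"
  have Ac: "A \<subseteq> carrier K" using S(2) unfolding A_def by auto
  have Si: "inv_sub (kspan A)" by (rule kspan_inv_sub[OF Ac])
  have Ss: "subgroup (kspan A) K" using Si by (simp add: inv_sub_def)
  have AS: "A \<subseteq> kspan A" by (rule kspan_incl)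
  have "h \<in> generate G S \<Longrightarrow> fst h \<in> kspan A" for h
  proof (induction rule: generate.induct)
    case one then show ?case using Ss subgroup.one_closed by simp
  next
    case (incl h) then show ?case using AS unfolding A_def by auto
  next
    case (inv h)
    obtain a m where h: "h = (a, m)" by (cases h)
    have a: "a \<in> carrier K" "a \<in> kspan A" using inv S(2) AS unfolding h A_def by force+
    have "P (- m) (inv a) \<in> kspan A"
      using inv_sub_P[OF Si subgroup.m_inv_closed[OF Ss a(2)]] a by simp
    then show ?case unfolding h using G_inv[OF a(1)] by simp
  next
    case (eng h1 h2)
    obtain a m where h1: "h1 = (a, m)" by (cases h1)
    obtain b n where h2: "h2 = (b, n)" by (cases h2)
    have "a \<otimes> P m b \<in> kspan A"
      using eng.IH h1 h2 Ss inv_sub_P[OF Si] by (simp add: subgroup.m_closed)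
    then show ?case unfolding h1 h2 by simp
  qed
  then have "carrier K \<subseteq> kspan A" using S(3) by force
  then show ?thesis using S(1) Ac unfolding A_def by blast
qed

lemma fix_mult: "(\<phi>^^n) x = x \<Longrightarrow> (\<phi>^^(n * k)) x = x"
proof (induction k)
  case (Suc k)
  have "(\<phi>^^(n * Suc k)) x = (\<phi>^^n) ((\<phi>^^(n * k)) x)" by (simp add: funpow_add)
  then show ?case using Suc by simp
qed simp

abbreviation Per where "Per \<equiv> periodic_points K \<phi>"

lemma Per_inv_sub: "inv_sub Per"
proof -
  have Pc: "Per \<subseteq> carrier K" by (auto simp: periodic_points_def)
  have sg: "subgroup Per K"
  proof (rule subgroupI)
    show "Per \<subseteq> carrier K" by (rule Pc)
    have "(\<phi>^^1) \<one> = \<one>" by simp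
    then show "Per \<noteq> {}" unfolding periodic_points_def by force
  next
    fix a assume "a \<in> Per"
    then obtain n where a: "a \<in> carrier K" "n \<ge> 1" "(\<phi>^^n) a = a" unfolding periodic_points_def by blast
    then have "(\<phi>^^n) (inv a) = inv a" by simp
    then show "inv a \<in> Per" using a unfolding periodic_points_def by auto
  next
    fix a b assume "a \<in> Per" "b \<in> Per"
    then obtain n1 n2 where a: "a \<in> carrier K" "n1 \<ge> 1" "(\<phi>^^n1) a = a"
      and b: "b \<in> carrier K" "n2 \<ge> 1" "(\<phi>^^n2) b = b" unfolding periodic_points_def by blast
    have "(\<phi>^^(n1 * n2)) a = a" using fix_mult[OF a(3)] by simp
    moreover have "(\<phi>^^(n1 * n2)) b = b" using fix_mult[OF b(3), of n1] by (simp add: mult.commute)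
    ultimately have e: "(\<phi>^^(n1 * n2)) (a \<otimes> b) = a \<otimes> b" using a b by simp
    have ge: "n1 * n2 \<ge> 1" using a b by simp
    have c: "a \<otimes> b \<in> carrier K" using a b by simp
    show "a \<otimes> b \<in> Per" unfolding periodic_points_def using c e ge by blast
  qed
  have ph: "\<phi> x \<in> Per" if x: "x \<in> Per" for x
  proof -
    obtain n where a: "x \<in> carrier K" "n \<ge> 1" "(\<phi>^^n) x = x" using x unfolding periodic_points_def by blast
    have "(\<phi>^^n) (\<phi> x) = \<phi> x" using a by (metis funpow_swap1)
    then show ?thesis using a unfolding periodic_points_def by auto
  qed
  have ps: "psi x \<in> Per" if x: "x \<in> Per" for x
  proof -
    obtain n where a: "x \<in> carrier K" "n \<ge> 1" "(\<phi>^^n) x = x" using x unfolding periodic_points_def by blast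
    obtain n' where n': "n = Suc n'" using a(2) by (cases n) auto
    have "psi x = psi (\<phi> ((\<phi>^^n') x))" using a(3) n' by simp
    also have "\<dots> = (\<phi>^^n') x" using a(1) by simp
    finally have e: "psi x = (\<phi>^^n') x" .
    have "(\<phi>^^n) ((\<phi>^^n') x) = (\<phi>^^n') ((\<phi>^^n) x)"
      by (metis funpow_add add.commute comp_apply)
    then have "(\<phi>^^n) (psi x) = psi x" using e a(3) by simp
    then show ?thesis using a unfolding periodic_points_def by auto
  qed
  show ?thesis unfolding inv_sub_def using sg ph ps by blast
qed

lemma Per_fg:
  assumes "finite B" "B \<subseteq> Per" "kspan B = Per"
  shows "\<exists>F. finite F \<and> F \<subseteq> Per \<and> generate K F = Per"
proof -
  have "\<forall>b\<in>B. \<exists>n. n \<ge> 1 \<and> (\<phi>^^n) b = b" using assms(2) unfolding periodic_points_def by blast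
  then obtain per where per: "\<And>b. b \<in> B \<Longrightarrow> per b \<ge> 1 \<and> (\<phi>^^(per b)) b = b" by metis
  define N where "N = prod per B"
  have N1: "N \<ge> 1" unfolding N_def using per by (metis One_nat_def Suc_le_eq prod_pos not_less_eq_eq less_one)
  have NB: "(\<phi>^^N) b = b" if b: "b \<in> B" for b
  proof -
    have "per b dvd N" unfolding N_def using b assms(1) by (simp add: dvd_prod_eqI)
    then obtain k where "N = per b * k" by (rule dvdE)
    then show ?thesis using fix_mult[of "per b" b k] per[OF b] by simp
  qed
  have Bc: "B \<subseteq> carrier K" using assms(2) unfolding periodic_points_def by blast
  define F where "F = (\<lambda>(b, i). (\<phi>^^i) b) ` (B \<times> {..<N})"
  have Ffin: "finite F" unfolding F_def using assms(1) by simp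
  have phimod: "(\<phi>^^n) b \<in> F" if b: "b \<in> B" for b n
  proof -
    have "n = n mod N + N * (n div N)" by simp
    then have "(\<phi>^^n) b = (\<phi>^^(n mod N)) ((\<phi>^^(N * (n div N))) b)" by (metis funpow_add comp_apply)
    also have "(\<phi>^^(N * (n div N))) b = b" using fix_mult[OF NB[OF b]] .
    finally have "(\<phi>^^n) b = (\<phi>^^(n mod N)) b" .
    moreover have "n mod N < N" using N1 by simp
    ultimately show ?thesis unfolding F_def using b by force
  qed
  have "gens B = F"
  proof
    show "F \<subseteq> gens B"
    proof
      fix y assume "y \<in> F"
      then obtain b i where "b \<in> B" "y = (\<phi>^^i) b" unfolding F_def by auto
      then show "y \<in> gens B" unfolding gens_def by blast
    qed
  next
    show "gens B \<subseteq> F"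
    proof
      fix y assume "y \<in> gens B"
      then obtain b n where b: "b \<in> B" and y: "y = (\<phi>^^n) b \<or> y = (psi^^n) b" unfolding gens_def by blast
      show "y \<in> F"
      proof (cases "y = (\<phi>^^n) b")
        case True then show ?thesis using phimod[OF b] by simp
      next
        case False
        then have y: "y = (psi^^n) b" using y by blast
        have bc: "b \<in> carrier K" using b Bc by blast
        have "N * n = n + (N * n - n)" using N1 by (simp add: le_add_diff_inverse)
        then have "b = (\<phi>^^n) ((\<phi>^^(N * n - n)) b)"
          using fix_mult[OF NB[OF b], of n] by (metis funpow_add comp_apply)
        then have "(psi^^n) b = (\<phi>^^(N * n - n)) b" using bc by (metis fpow_closed(1) psi_phi_n)
        then show ?thesis using y phimod[OF b] by simp
      qed
    qed
  qed
  then have "generate K F = Per" using assms(3) unfolding kspan_def by simp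
  moreover have "F \<subseteq> Per" using \<open>gens B = F\<close> kspan_incl[of "gens B"] assms(3)
    by (metis generate.incl kspan_def subsetI)
  ultimately show ?thesis using Ffin by blast
qed

end

theorem corollary2p10:
  fixes K :: "('a, 'b) monoid_scheme" and \<phi> :: "'a \<Rightarrow> 'a"
  assumes "comm_group K"
    and "\<phi> \<in> auto K"
    and "finitely_generated_group (semidirect_Z K \<phi>)"
  shows "subgroup (periodic_points K \<phi>) K
    \<and> finitely_generated_group (K\<lparr>carrier := periodic_points K \<phi>\<rparr>)
    \<and> \<phi> ` (periodic_points K \<phi>) = periodic_points K \<phi>"
proof -
  interpret PS K \<phi> using assms(1,2) by (simp add: PS_def PS_axioms_def)
  obtain A where A: "finite A" "A \<subseteq> carrier K" "carrier K \<subseteq> kspan A" using K_span[OF assms(3)] by blast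
  have Pi: "inv_sub (periodic_points K \<phi>)" by (rule Per_inv_sub)
  have "periodic_points K \<phi> \<subseteq> kspan A" using A(3) inv_sub_carrier[OF Pi] by blast
  then obtain B where B: "finite B" "B \<subseteq> periodic_points K \<phi>" "kspan B = periodic_points K \<phi>"
    using noeth[OF A(1) A(2) Pi] by blast
  obtain F where F: "finite F" "F \<subseteq> periodic_points K \<phi>" "generate K F = periodic_points K \<phi>"
    using Per_fg[OF B] by blast
  have sg: "subgroup (periodic_points K \<phi>) K" using Pi by (simp add: inv_sub_def)
  have "generate (K\<lparr>carrier := periodic_points K \<phi>\<rparr>) F = periodic_points K \<phi>"
    using generate_consistent[OF F(2) sg] F(3) by simp
  then have fg: "finitely_generated_group (K\<lparr>carrier := periodic_points K \<phi>\<rparr>)"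
    unfolding finitely_generated_group_def using F by auto
  have img: "\<phi> ` (periodic_points K \<phi>) = periodic_points K \<phi>"
  proof
    show "\<phi> ` periodic_points K \<phi> \<subseteq> periodic_points K \<phi>" using Pi by (auto simp: inv_sub_def)
  next
    show "periodic_points K \<phi> \<subseteq> \<phi> ` periodic_points K \<phi>"
    proof
      fix x assume x: "x \<in> periodic_points K \<phi>"
      then have "psi x \<in> periodic_points K \<phi>" using Pi by (auto simp: inv_sub_def)
      moreover have "x = \<phi> (psi x)" using x inv_sub_carrier[OF Pi] by auto
      ultimately show "x \<in> \<phi> ` periodic_points K \<phi>" by blast
    qed
  qed
  show ?thesis using sg fg img by blast
qed

end
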